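(* Let $F\in\mathbb{C}[x,y,z]$ be an irreducible polynomial of degree $d$ such that none of its three first-order partial derivatives is identically zero. Then there is a variety $\mathcal{Y}_1\subset\mathbb{C}^2$ of dimension one with $\deg(\mathcal{Y}_1)=O(d^2)$ and $\mathcal{S}\subset\mathcal{Y}_1$, such that for every $(y_1,y_2)\in\mathbb{C}^2\setminus\mathcal{Y}_1$ the set $\gamma_{y_1,y_2}$ contains no line parallel to one of the coordinate axes.
   Context: $\mathrm{cl}$ denotes Zariski closure. For $(y,y')\in\mathbb{C}^2$, $\gamma_{y,y'}=\mathrm{cl}(\{(z,z'):\exists x,\ F(x,y,z)=F(x,y',z')=0\})\subset\mathbb{C}^2$ (coordinates $(z,z')$). Let $R=\{y_0\in\mathbb{C}: \exists x_0 \text{ with } F(x_0,y_0,z)\equiv0 \text{ in } z, \text{ or } \exists z_0 \text{ with } F(x,y_0,z_0)\equiv 0 \text{ in } x\}$ and $\mathcal{S}=R\times R$. Degree of a variety is the sum of the degrees of its irreducible components. Implied constant is absolute. *)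

theory Defs
  imports "HOL-Computational_Algebra.Polynomial"
begin

text \<open>Polynomials in C[x,y,z] are represented as nested univariate polynomials
  ((C[z])[y])[x]; polynomials in C[z,z'] as (C[z'])[z].\<close>

type_synonym poly3 = "complex poly poly poly"
type_synonym poly2 = "complex poly poly"

definition eval3 :: "poly3 \<Rightarrow> complex \<Rightarrow> complex \<Rightarrow> complex \<Rightarrow> complex" where
  "eval3 F x y z = poly (poly (poly F [:[:x:]:]) [:y:]) z"

definition eval2 :: "poly2 \<Rightarrow> complex \<times> complex \<Rightarrow> complex" where
  "eval2 p q = poly (poly p [:fst q:]) (snd q)"

definition total_degree3 :: "poly3 \<Rightarrow> nat" where
  "total_degree3 F = Max (insert 0 {i + j + k | i j k. coeff (coeff (coeff F i) j) k \<noteq> 0})"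

definition dx3 :: "poly3 \<Rightarrow> poly3" where "dx3 F = pderiv F"
definition dy3 :: "poly3 \<Rightarrow> poly3" where "dy3 F = map_poly pderiv F"
definition dz3 :: "poly3 \<Rightarrow> poly3" where "dz3 F = map_poly (map_poly pderiv) F"

definition zero_set2 :: "poly2 set \<Rightarrow> (complex \<times> complex) set" where
  "zero_set2 S = {q. \<forall>p\<in>S. eval2 p q = 0}"

definition algebraic2 :: "(complex \<times> complex) set \<Rightarrow> bool" where
  "algebraic2 V \<longleftrightarrow> (\<exists>S. V = zero_set2 S)"

definition zariski_cl :: "(complex \<times> complex) set \<Rightarrow> (complex \<times> complex) set" where
  "zariski_cl A = zero_set2 {p. \<forall>q\<in>A. eval2 p q = 0}"

definition irred_alg2 :: "(complex \<times> complex) set \<Rightarrow> bool" where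
  "irred_alg2 V \<longleftrightarrow> algebraic2 V \<and> V \<noteq> {} \<and>
     (\<forall>A B. algebraic2 A \<longrightarrow> algebraic2 B \<longrightarrow> V = A \<union> B \<longrightarrow> V = A \<or> V = B)"

definition irred_components2 :: "(complex \<times> complex) set \<Rightarrow> (complex \<times> complex) set set" where
  "irred_components2 V = {W. W \<subseteq> V \<and> irred_alg2 W \<and>
       (\<forall>W'. irred_alg2 W' \<longrightarrow> W \<subseteq> W' \<longrightarrow> W' \<subseteq> V \<longrightarrow> W' = W)}"

definition alg_dim2 :: "(complex \<times> complex) set \<Rightarrow> nat" where
  "alg_dim2 V = Sup {k. \<exists>c :: nat \<Rightarrow> (complex \<times> complex) set.
      (\<forall>i\<le>k. irred_alg2 (c i) \<and> c i \<subseteq> V) \<and> (\<forall>i<k. c i \<subset> c (Suc i))}"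

definition affine_sub2 :: "nat \<Rightarrow> (complex \<times> complex) set \<Rightarrow> bool" where
  "affine_sub2 m L \<longleftrightarrow>
     (m = 0 \<and> (\<exists>a. L = {a})) \<or>
     (m = 1 \<and> (\<exists>a b u v. (u, v) \<noteq> (0, 0) \<and> L = {(a + t * u, b + t * v) | t. True})) \<or>
     (m = 2 \<and> L = UNIV)"

definition irred_deg2 :: "(complex \<times> complex) set \<Rightarrow> nat" where
  "irred_deg2 V = Sup {card (V \<inter> L) | L. affine_sub2 (2 - alg_dim2 V) L \<and> finite (V \<inter> L)}"

definition var_deg2 :: "(complex \<times> complex) set \<Rightarrow> nat" where
  "var_deg2 V = (\<Sum>W\<in>irred_components2 V. irred_deg2 W)"

definition Rset :: "poly3 \<Rightarrow> complex set" where
  "Rset F = {y0. (\<exists>x0. poly (poly F [:[:x0:]:]) [:y0:] = 0) \<or>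
                 (\<exists>z0. map_poly (\<lambda>q. poly (poly q [:y0:]) z0) F = 0)}"

definition gamma :: "poly3 \<Rightarrow> complex \<Rightarrow> complex \<Rightarrow> (complex \<times> complex) set" where
  "gamma F y y' = zariski_cl {(z, z'). \<exists>x. eval3 F x y z = 0 \<and> eval3 F x y' z' = 0}"

definition contains_axis_parallel_line :: "(complex \<times> complex) set \<Rightarrow> bool" where
  "contains_axis_parallel_line A \<longleftrightarrow>
     (\<exists>c. {(c, t) | t. True} \<subseteq> A \<or> {(t, c) | t. True} \<subseteq> A)"

end

theory Submission imports Defs "HOL-Computational_Algebra.Field_as_Ring" "Subresultants.Subresultant_Gcd" "Jordan_Normal_Form.Determinant" "HOL-Computational_Algebra.Fundamental_Theorem_Algebra" begin


lemma crh_comp: assumes "comm_ring_hom f" "comm_ring_hom g" shows "comm_ring_hom (\<lambda>x. f (g x))"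
proof -
  interpret f: comm_ring_hom f by fact
  interpret g: comm_ring_hom g by fact
  show ?thesis by unfold_locales (auto simp: f.hom_add g.hom_add f.hom_mult g.hom_mult)
qed

lemma crh_map: assumes "comm_ring_hom h" shows "comm_ring_hom (map_poly h)"
proof -
  interpret h: comm_ring_hom h by fact
  interpret map_poly_comm_ring_hom h ..
  show ?thesis by (rule comm_ring_hom_axioms)
qed

lemma crh_mult: "comm_ring_hom h \<Longrightarrow> h (a * b) = h a * h b"
  by (metis comm_ring_hom.axioms ring_hom.axioms semiring_hom.axioms(2) monoid_mult_hom.axioms(2) semigroup_mult_hom.axioms times_hom.hom_mult)
lemma crh_add: "comm_ring_hom h \<Longrightarrow> h (a + b) = h a + h b"
proof - assume "comm_ring_hom h" then interpret comm_ring_hom h . show ?thesis by (rule hom_add) qed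
lemma crh_one: "comm_ring_hom h \<Longrightarrow> h 1 = 1"
proof - assume "comm_ring_hom h" then interpret comm_ring_hom h . show ?thesis by (rule hom_one) qed
lemma crh_zero: "comm_ring_hom h \<Longrightarrow> h 0 = 0"
proof - assume "comm_ring_hom h" then interpret comm_ring_hom h . show ?thesis by (rule hom_zero) qed
lemma crh_poly_map_poly: "comm_ring_hom h \<Longrightarrow> poly (map_poly h p) (h x) = h (poly p x)"
proof - assume "comm_ring_hom h" then interpret comm_ring_hom h . show ?thesis by (rule poly_map_poly) qed

lemma crh_poly: "comm_ring_hom (\<lambda>p. poly p a)" by (rule poly_hom.comm_ring_hom_axioms)

lemma crh_const: "comm_ring_hom (\<lambda>a. [:a:])"
  by unfold_locales (auto simp: one_pCons)

lemma sylv_entry: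
  fixes p q :: "'a::comm_ring_1 poly"
  assumes dp: "degree p \<le> m" and dq: "degree q \<le> n" and i: "i < m+n" and j: "j < m+n"
  shows "sylvester_mat_sub m n p q $$ (i,j) =
    (if i < n then coeff (monom 1 (n - 1 - i) * p) (m+n-1-j)
     else coeff (monom 1 (m + n - 1 - i) * q) (m+n-1-j))"
  unfolding sylvester_mat_sub_index[OF i j] coeff_monom_mult
  apply (cases "i < n")
  apply (cases "i \<le> j \<and> j - i \<le> m")
  using i j dp dq apply (force, force simp: coeff_eq_0)
  apply (cases "i - n \<le> j \<and> j \<le> i")
  using i j dp dq coeff_eq_0[of q] by auto

lemma sum_coeff_rev:
  fixes r :: "'a::comm_ring_1 poly"
  assumes "degree r < N"
  shows "(\<Sum>j<N. coeff r (N-1-j) * x^(N-1-j)) = poly r x"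
proof -
  have "(\<Sum>j<N. coeff r (N-1-j) * x^(N-1-j)) = (\<Sum>k<N. coeff r k * x^k)"
    using sum.nat_diff_reindex[of "\<lambda>k. coeff r k * x^k" N] by (simp add: Suc_diff_Suc)
  also have "\<dots> = poly r x" using assms by (simp add: poly_altdef lessThan_Suc_atMost[symmetric]
      sum.mono_neutral_right[of "{..<N}" "{..<Suc (degree r)}"] coeff_eq_0)
  finally show ?thesis .
qed

lemma deg_monom_mult: "degree (monom c k * p) \<le> k + degree p"
  by (meson add_le_mono1 degree_monom_le degree_mult_le order_trans)

lemma sylv_row:
  fixes p q :: "'a::comm_ring_1 poly"
  assumes dp: "degree p \<le> m" and dq: "degree q \<le> n" and i: "i < m+n"
  shows "(\<Sum>j<m+n. sylvester_mat_sub m n p q $$ (i,j) * x^(m+n-1-j)) =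
     (if i < n then x^(n-1-i) * poly p x else x^(m+n-1-i) * poly q x)"
proof -
  define R where "R = (if i < n then monom 1 (n - 1 - i) * p else monom 1 (m + n - 1 - i) * q)"
  have "(\<Sum>j<m+n. sylvester_mat_sub m n p q $$ (i,j) * x^(m+n-1-j)) =
        (\<Sum>j<m+n. coeff R (m+n-1-j) * x^(m+n-1-j))"
    by (rule sum.cong, simp, subst sylv_entry[OF dp dq i], auto simp: R_def)
  also have "\<dots> = poly R x"
  proof (rule sum_coeff_rev)
    show "degree R < m + n"
    proof (cases "i < n")
      case True
      have "degree R \<le> (n-1-i) + degree p" unfolding R_def if_P[OF True] by (rule deg_monom_mult)
      thus ?thesis using True dp by linarith
    next
      case False
      have "degree R \<le> (m+n-1-i) + degree q" unfolding R_def if_not_P[OF False] by (rule deg_monom_mult)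
      thus ?thesis using False dq i by linarith
    qed
  qed
  also have "\<dots> = (if i < n then x^(n-1-i) * poly p x else x^(m+n-1-i) * poly q x)"
    unfolding R_def by (auto simp: poly_monom)
  finally show ?thesis .
qed

lemma resultant_sub_common_root:
  fixes p q :: "'a::idom poly"
  assumes dp: "degree p \<le> m" and dq: "degree q \<le> n" and mn: "0 < m+n"
    and rp: "poly p x = 0" and rq: "poly q x = 0"
  shows "resultant_sub m n p q = 0"
proof -
  let ?M = "sylvester_mat_sub m n p q"
  define v where "v = vec (m+n) (\<lambda>j. x^(m+n-1-j))"
  have v: "v \<in> carrier_vec (m+n)" unfolding v_def by simp
  have v1: "v $ (m+n-1) = 1" unfolding v_def using mn by simp
  have v0: "v \<noteq> 0\<^sub>v (m+n)"
  proof
    assume "v = 0\<^sub>v (m+n)"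
    hence "v $ (m+n-1) = 0" using mn by simp
    thus False using v1 by simp
  qed
  have "?M *\<^sub>v v = 0\<^sub>v (m+n)"
  proof (rule eq_vecI)
    fix i assume "i < dim_vec (0\<^sub>v (m + n) :: 'a vec)"
    hence i: "i < m+n" by simp
    have "(?M *\<^sub>v v) $ i = (\<Sum>j<m+n. ?M $$ (i,j) * x^(m+n-1-j))"
      using i by (simp add: mult_mat_vec_def scalar_prod_def v_def lessThan_atLeast0)
    also have "\<dots> = 0" using sylv_row[OF dp dq i] rp rq by simp
    finally show "(?M *\<^sub>v v) $ i = 0\<^sub>v (m + n) $ i" using i by simp
  qed simp
  thus ?thesis unfolding resultant_sub_def
    using det_0_iff_vec_prod_zero[OF sylvester_mat_sub_carrier] v v0 by blast
qed

lemma resultant_sub_hom: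
  assumes "comm_ring_hom h"
  shows "h (resultant_sub m n p q) = resultant_sub m n (map_poly h p) (map_poly h q)"
proof -
  interpret comm_ring_hom h by fact
  show ?thesis unfolding resultant_sub_def hom_det[symmetric]
    by (subst sylvester_mat_sub_map, auto)
qed

lemma complex_no_common_root_coprime:
  fixes p q :: "complex poly"
  assumes p0: "p \<noteq> 0" and nc: "\<not>(\<exists>x. poly p x = 0 \<and> poly q x = 0)"
  shows "coprime p q"
proof -
  let ?g = "gcd p q"
  have g0: "?g \<noteq> 0" using p0 by simp
  have "degree ?g = 0"
  proof (rule ccontr)
    assume "degree ?g \<noteq> 0"
    hence "\<not> constant (poly ?g)" by (simp add: constant_degree)
    then obtain z where "poly ?g z = 0"
      using fundamental_theorem_of_algebra by blast
    moreover have "?g dvd p" "?g dvd q" by auto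
    ultimately have "poly p z = 0" "poly q z = 0" by (auto simp: poly_eq_0_iff_dvd dvd_trans)
    thus False using nc by blast
  qed
  hence "is_unit ?g" using g0 by (rule is_unit_iff_degree[THEN iffD2, rotated])
  thus ?thesis by (simp only: is_unit_gcd)
qed

lemma poly_rev_sum:
  "(\<Sum>k<n. f (n-1-k) * x^k) = (\<Sum>i<n. f i * x^(n-1-i))"
  by (rule sum.reindex_bij_witness[of _ "\<lambda>i. n-1-i" "\<lambda>i. n-1-i"]) auto

lemma sum_split_add: "(\<Sum>i<n+m. g i) = (\<Sum>i<n. g i) + (\<Sum>i<m. g (n+i))" for g :: "nat \<Rightarrow> 'a::comm_monoid_add"
  by (induct m) (simp_all add: add_ac)

lemma coeff_rev_sum: "coeff (\<Sum>k<n. monom (f k) k) j = (if j < n then f j else 0)"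
  by (simp add: coeff_sum coeff_monom)

lemma degree_rev_sum: assumes "(\<Sum>k<n. monom (f k) k) \<noteq> 0"
  shows "degree (\<Sum>k<n. monom (f k) k) < n"
proof (rule ccontr)
  let ?a = "\<Sum>k<n. monom (f k) k"
  assume "\<not> degree ?a < n"
  hence "coeff ?a (degree ?a) = 0" by (simp add: coeff_rev_sum)
  thus False using assms by simp
qed

lemma resultant_sub_nonzero:
  fixes p q :: "complex poly"
  assumes p0: "p \<noteq> 0" and q0: "q \<noteq> 0" and dp: "degree p \<le> m" and dq: "degree q \<le> n"
    and ex: "degree p = m \<or> degree q = n"
    and nc: "\<not>(\<exists>x. poly p x = 0 \<and> poly q x = 0)"
  shows "resultant_sub m n p q \<noteq> 0"
proof
  assume det0: "resultant_sub m n p q = 0"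
  let ?M = "sylvester_mat_sub m n p q"
  have MC: "?M \<in> carrier_mat (m+n) (m+n)" by (rule sylvester_mat_sub_carrier)
  have MTC: "?M\<^sup>T \<in> carrier_mat (m+n) (m+n)" using MC by simp
  have "det (?M\<^sup>T) = 0" using det_transpose[OF MC] det0 unfolding resultant_sub_def by simp
  then obtain w where w: "w \<in> carrier_vec (m+n)" "w \<noteq> 0\<^sub>v (m+n)" "?M\<^sup>T *\<^sub>v w = 0\<^sub>v (m+n)"
    using det_0_iff_vec_prod_zero[OF MTC] by blast
  have col: "(\<Sum>i<m+n. ?M $$ (i,j) * w$i) = 0" if j: "j < m+n" for j
  proof -
    have "(?M\<^sup>T *\<^sub>v w) $ j = 0" using w(3) j by simp
    moreover have "(?M\<^sup>T *\<^sub>v w) $ j = (\<Sum>i<m+n. ?M $$ (i,j) * w$i)"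
      using j w(1) by (simp add: mult_mat_vec_def scalar_prod_def lessThan_atLeast0 row_transpose col_def)
    ultimately show ?thesis by simp
  qed
  define a where "a = (\<Sum>k<n. monom (w$(n-1-k)) k)"
  define b where "b = (\<Sum>k<m. monom (w$(n+(m-1-k))) k)"
  have pa: "poly a x = (\<Sum>i<n. w$i * x^(n-1-i))" for x
    unfolding a_def poly_sum poly_monom using poly_rev_sum[where n=n and f="\<lambda>i. w$i" and x=x] by simp
  have pb: "poly b x = (\<Sum>i<m. w$(n+i) * x^(m-1-i))" for x
    unfolding b_def poly_sum poly_monom using poly_rev_sum[where n=m and f="\<lambda>i. w$(n+i)" and x=x] by simp
  have "poly (a*p + b*q) x = 0" for x
  proof -
    have split: "(\<Sum>i<m+n. g i) = (\<Sum>i<n. g i) + (\<Sum>i<m. g (n+i))" for g :: "nat \<Rightarrow> complex"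
    proof -
      have "(\<Sum>i<m+n. g i) = (\<Sum>i<n+m. g i)" by (simp add: add.commute)
      also have "\<dots> = (\<Sum>i<n. g i) + (\<Sum>i<m. g (n+i))" by (rule sum_split_add)
      finally show ?thesis .
    qed
    have "(\<Sum>i<m+n. w$i * (\<Sum>j<m+n. ?M $$ (i,j) * x^(m+n-1-j))) =
          (\<Sum>j<m+n. x^(m+n-1-j) * (\<Sum>i<m+n. ?M $$ (i,j) * w$i))"
    proof -
      have "(\<Sum>i<m+n. w$i * (\<Sum>j<m+n. ?M $$ (i,j) * x^(m+n-1-j))) =
            (\<Sum>i<m+n. \<Sum>j<m+n. x^(m+n-1-j) * (?M $$ (i,j) * w$i))"
        by (simp add: sum_distrib_left mult.commute mult.left_commute)
      also have "\<dots> = (\<Sum>j<m+n. \<Sum>i<m+n. x^(m+n-1-j) * (?M $$ (i,j) * w$i))"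
        by (rule sum.swap)
      also have "\<dots> = (\<Sum>j<m+n. x^(m+n-1-j) * (\<Sum>i<m+n. ?M $$ (i,j) * w$i))"
        by (simp add: sum_distrib_left)
      finally show ?thesis .
    qed
    also have "\<dots> = 0" using col by simp
    finally have z: "(\<Sum>i<m+n. w$i * (\<Sum>j<m+n. ?M $$ (i,j) * x^(m+n-1-j))) = 0" .
    have "(\<Sum>i<m+n. w$i * (\<Sum>j<m+n. ?M $$ (i,j) * x^(m+n-1-j))) =
          (\<Sum>i<m+n. w$i * (if i < n then x^(n-1-i) * poly p x else x^(m+n-1-i) * poly q x))"
      by (rule sum.cong, simp, subst sylv_row[OF dp dq], auto)
    also have "\<dots> = (\<Sum>i<n. w$i * (x^(n-1-i) * poly p x)) + (\<Sum>i<m. w$(n+i) * (x^(m-1-i) * poly q x))"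
      by (subst split, auto intro!: sum.cong)
    also have "\<dots> = poly a x * poly p x + poly b x * poly q x"
      unfolding pa pb by (simp add: sum_distrib_left sum_distrib_right mult_ac)
    finally show ?thesis using z by simp
  qed
  hence abz: "a*p + b*q = 0" using poly_all_0_iff_0 by blast
  have ab0: "a \<noteq> 0 \<or> b \<noteq> 0"
  proof -
    obtain i where i: "i < m+n" "w$i \<noteq> 0" using w(1,2) by (auto simp: vec_eq_iff)
    show ?thesis
    proof (cases "i < n")
      case True
      have "coeff a (n-1-i) = w$i" unfolding a_def coeff_rev_sum using True by auto
      thus ?thesis using i by auto
    next
      case False
      define i' where "i' = i - n"
      have i': "i = n + i'" "i' < m" using i False unfolding i'_def by auto
      have "coeff b (m-1-i') = w$i" unfolding b_def coeff_rev_sum using i' by auto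
      thus ?thesis using i by auto
    qed
  qed
  have da: "a \<noteq> 0 \<Longrightarrow> degree a < n" unfolding a_def by (rule degree_rev_sum)
  have db: "b \<noteq> 0 \<Longrightarrow> degree b < m" unfolding b_def by (rule degree_rev_sum)
  show False using ex
  proof
    assume dpm: "degree p = m"
    have "b * q = - (a * p)" using abz by (simp add: eq_neg_iff_add_eq_0 add.commute)
    hence "p dvd b * q" by simp
    moreover have "coprime p q" using complex_no_common_root_coprime[OF p0 nc] .
    ultimately have "p dvd b" by (simp add: coprime_dvd_mult_left_iff)
    have "b = 0"
    proof (rule ccontr)
      assume "b \<noteq> 0"
      hence "degree p \<le> degree b" using \<open>p dvd b\<close> by (rule dvd_imp_degree_le[rotated])
      thus False using db[OF \<open>b \<noteq> 0\<close>] dpm by simp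
    qed
    hence "a = 0" using abz p0 by simp
    thus False using ab0 \<open>b = 0\<close> by simp
  next
    assume dqn: "degree q = n"
    have "a * p = - (b * q)" using abz by (simp add: eq_neg_iff_add_eq_0)
    hence "q dvd a * p" by simp
    moreover have "coprime q p" using complex_no_common_root_coprime[OF p0 nc] by (simp add: coprime_commute)
    ultimately have "q dvd a" by (simp add: coprime_dvd_mult_left_iff)
    have "a = 0"
    proof (rule ccontr)
      assume "a \<noteq> 0"
      hence "degree q \<le> degree a" using \<open>q dvd a\<close> by (rule dvd_imp_degree_le[rotated])
      thus False using da[OF \<open>a \<noteq> 0\<close>] dqn by simp
    qed
    hence "b = 0" using abz q0 by simp
    thus False using ab0 \<open>a = 0\<close> by simp
  qed
qed



definition swap2 :: "'a::comm_ring_1 poly poly \<Rightarrow> 'a poly poly" where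
  "swap2 p = poly (map_poly (map_poly (\<lambda>a. [:a:])) p) [:[:0,1:]:]"

lemma map_poly_pCons0: "f 0 = 0 \<Longrightarrow> map_poly f (pCons a p) = pCons (f a) (map_poly f p)"
  by (metis map_poly_pCons map_poly_0 pCons_0_0)

lemma swap2_pCons: "swap2 (pCons c p) = map_poly (\<lambda>a. [:a:]) c + [:[:0,1:]:] * swap2 p"
  unfolding swap2_def by (subst map_poly_pCons0) auto

lemma coeff_swap2: "coeff (coeff (swap2 p) j) k = coeff (coeff p k) j"
proof (induct p arbitrary: k)
  case 0 thus ?case by (simp add: swap2_def)
next
  case (pCons c p)
  show ?case
  proof (cases k)
    case 0 thus ?thesis by (simp add: swap2_pCons coeff_map_poly)
  next
    case (Suc k') thus ?thesis using pCons(2)[of k'] by (simp add: swap2_pCons coeff_map_poly)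
  qed
qed

lemma swap2_swap2[simp]: "swap2 (swap2 p) = p"
  by (rule poly_eqI, rule poly_eqI) (simp add: coeff_swap2)

lemma crh_swap2: "comm_ring_hom (swap2 :: 'a::comm_ring_1 poly poly \<Rightarrow> _)"
proof -
  have "comm_ring_hom (\<lambda>p. (\<lambda>q. poly q [:[:0::'a,1:]:]) (map_poly (map_poly (\<lambda>a. [:a:])) p))"
    by (rule crh_comp[OF crh_poly crh_map[OF crh_map[OF crh_const]]])
  thus ?thesis unfolding swap2_def[abs_def] by simp
qed

lemma poly_swap2: "poly (poly (swap2 p) [:a:]) b = poly (poly p [:b:]) a"
proof (induct p)
  case 0 thus ?case by (simp add: swap2_def)
next
  case (pCons c p)
  have "poly (map_poly (\<lambda>a. [:a:]) c) [:a:] = [:poly c a:]" by (rule coeff_lift_hom.poly_map_poly)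
  thus ?case using pCons(2) by (simp add: swap2_pCons)
qed

definition sig :: "complex poly poly poly \<Rightarrow> complex poly poly poly" where
  "sig F = swap2 (map_poly swap2 (swap2 F))"

lemma coeff_sig: "coeff (coeff (coeff (sig F) k) j) i = coeff (coeff (coeff F i) j) k"
  unfolding sig_def coeff_swap2 by (simp add: coeff_map_poly coeff_swap2 swap2_def[of 0])

lemma sig_sig[simp]: "sig (sig F) = F"
  by (intro poly_eqI) (simp add: coeff_sig)

lemma crh_sig: "comm_ring_hom sig"
proof -
  have "comm_ring_hom (\<lambda>F. swap2 ((map_poly swap2) (swap2 F)) :: complex poly poly poly)"
    by (rule crh_comp[OF crh_swap2 crh_comp[OF crh_map[OF crh_swap2] crh_swap2]])
  thus ?thesis unfolding sig_def[abs_def] .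
qed

lemma sig_mult: "sig (a * b) = sig a * sig b"
  using crh_sig by (rule crh_mult)
lemma sig_one: "sig 1 = 1"
  using crh_sig by (rule crh_one)
lemma sig_zero: "sig 0 = 0"
  using crh_sig by (rule crh_zero)

lemma sig_eq_iff: "sig a = sig b \<longleftrightarrow> a = b" by (metis sig_sig)

lemma sig_dvd: "a dvd b \<Longrightarrow> sig a dvd sig b"
  by (metis dvdE dvdI sig_mult)

lemma sig_dvd_iff: "sig a dvd sig b \<longleftrightarrow> a dvd b"
  by (metis sig_dvd sig_sig)

lemma sig_unit_iff: "is_unit (sig a) \<longleftrightarrow> is_unit a"
  by (metis sig_dvd_iff sig_one)

lemma sig_irreducible: assumes "irreducible F" shows "irreducible (sig F)"
proof (rule irreducibleI)
  show "sig F \<noteq> 0" using assms sig_eq_iff[of F 0] sig_zero by (auto simp: irreducible_def)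
  show "\<not> is_unit (sig F)" using assms sig_unit_iff by (auto simp: irreducible_def)
  fix a b assume "sig F = a * b"
  hence "F = sig a * sig b" by (metis sig_mult sig_sig)
  hence "is_unit (sig a) \<or> is_unit (sig b)" using assms by (auto simp: irreducible_def)
  thus "is_unit a \<or> is_unit b" by (simp add: sig_unit_iff)
qed

definition ev :: "complex \<Rightarrow> complex \<Rightarrow> complex poly poly \<Rightarrow> complex" where
  "ev y w q = poly (poly q [:y:]) w"

lemma crh_ev: "comm_ring_hom (ev y w)"
  unfolding ev_def[abs_def] by (rule crh_comp[OF crh_poly crh_poly])

lemma eval3_ev: "eval3 G x y w = poly (map_poly (ev y w) G) x"
proof -
  have "ev y w [:[:x:]:] = x" by (simp add: ev_def)
  hence "poly (map_poly (ev y w) G) x = poly (map_poly (ev y w) G) (ev y w [:[:x:]:])" by simp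
  also have "\<dots> = ev y w (poly G [:[:x:]:])"
    by (rule crh_poly_map_poly[OF crh_ev])
  finally show ?thesis by (simp add: eval3_def ev_def)
qed

lemma eval3_sig: "eval3 (sig F) c b a = eval3 F a b c"
proof -
  let ?H = "map_poly swap2 (swap2 F)"
  have "poly (poly (sig F) [:[:c:]:]) [:b:] = poly (poly ?H [:[:b:]:]) [:c:]"
    unfolding sig_def by (rule poly_swap2)
  also have "poly ?H [:[:b:]:] = swap2 (poly (swap2 F) [:[:b:]:])"
  proof -
    have "swap2 [:[:b:]:] = [:[:b:]:]" by (rule poly_eqI, rule poly_eqI) (simp add: coeff_swap2 coeff_pCons split: nat.split)
    hence "poly ?H [:[:b:]:] = poly ?H (swap2 [:[:b:]:])" by simp
    also have "\<dots> = swap2 (poly (swap2 F) [:[:b:]:])"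
      by (rule crh_poly_map_poly[OF crh_swap2])
    finally show ?thesis .
  qed
  finally have 1: "poly (poly (sig F) [:[:c:]:]) [:b:] = poly (swap2 (poly (swap2 F) [:[:b:]:])) [:c:]" .
  have "poly (poly (swap2 (poly (swap2 F) [:[:b:]:])) [:c:]) a = poly (poly (poly (swap2 F) [:[:b:]:]) [:a:]) c"
    by (rule poly_swap2)
  also have "poly (poly (swap2 F) [:[:b:]:]) [:a:] = poly (poly F [:[:a:]:]) [:b:]"
    by (rule poly_swap2)
  finally show ?thesis unfolding eval3_def 1 .
qed




lemma degree_sum_bound: "(\<And>x. x \<in> A \<Longrightarrow> degree (f x) \<le> D) \<Longrightarrow> degree (sum f A) \<le> (D::nat)"
  by (induct A rule: infinite_finite_induct) (auto intro: degree_add_le)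

lemma degree_prod_bound: "(\<And>x. x \<in> A \<Longrightarrow> degree (f x :: 'a::comm_ring_1 poly) \<le> D) \<Longrightarrow> degree (prod f A) \<le> card A * D"
proof (induct A rule: infinite_finite_induct)
  case (insert x F)
  have "degree (prod f (insert x F)) = degree (f x * prod f F)" using insert by simp
  also have "\<dots> \<le> degree (f x) + degree (prod f F)" by (rule degree_mult_le)
  also have "\<dots> \<le> D + card F * D" using insert by (intro add_mono) auto
  finally show ?case using insert by simp
qed auto

lemma degree_of_int_mult: "degree (of_int k * p :: 'a::comm_ring_1 poly) \<le> degree p"
proof -
  have "of_int k * p = Polynomial.smult (of_int k) p" by (simp add: of_int_poly)
  thus ?thesis by (simp add: degree_smult_le)
qed


lemma degree_det_le:
  fixes M :: "'a::comm_ring_1 poly mat"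
  assumes M: "M \<in> carrier_mat N N" and e: "\<And>i j. i < N \<Longrightarrow> j < N \<Longrightarrow> degree (M $$ (i,j)) \<le> D"
  shows "degree (det M) \<le> N * D"
  unfolding det_def'[OF M]
proof (rule degree_sum_bound)
  fix p assume "p \<in> {p. p permutes {0..<N}}"
  hence "\<And>i. i < N \<Longrightarrow> p i < N" by (auto dest: permutes_in_image)
  hence "degree (\<Prod>i = 0..<N. M $$ (i, p i)) \<le> card {0..<N} * D"
    by (intro degree_prod_bound e) auto
  thus "degree (of_int (sign p) * (\<Prod>i = 0..<N. M $$ (i, p i))) \<le> N * D"
    using degree_of_int_mult[of "sign p"] by (metis card_atLeastLessThan diff_zero order_trans)
qed

lemma poly_coeff_map: "poly (map_poly (\<lambda>q. coeff q l) Q) y = coeff (poly Q [:y:]) l"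
proof (induct Q)
  case (pCons a Q)
  thus ?case by (simp add: map_poly_pCons0)
qed simp

lemma elim_bound:
  fixes A B :: "complex poly poly poly"
  assumes res: "resultant A B \<noteq> 0" and dB: "degree B \<ge> 1" and dA: "degree A \<le> d" and dB': "degree B \<le> d"
    and cA: "\<And>i. degree (coeff A i) \<le> d" and cB: "\<And>i. degree (coeff B i) \<le> d"
  shows "\<exists>u. u \<noteq> 0 \<and> degree u \<le> 2*d*d \<and>
     (\<forall>y0. (\<forall>w0. \<exists>v0. poly (map_poly (ev y0 w0) A) v0 = 0 \<and> poly (map_poly (ev y0 w0) B) v0 = 0) \<longrightarrow> poly u y0 = 0)"
proof -
  define Q where "Q = resultant A B"
  let ?m = "degree A" and ?n = "degree B"
  have Qs: "Q = resultant_sub ?m ?n A B" unfolding Q_def by (rule resultant_sub)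
  have degQ: "degree Q \<le> (?m + ?n) * d"
    unfolding Q_def resultant_def sylvester_mat_def
  proof (rule degree_det_le[OF sylvester_mat_sub_carrier])
    fix i j assume "i < ?m + ?n" "j < ?m + ?n"
    thus "degree (sylvester_mat_sub ?m ?n A B $$ (i, j)) \<le> d"
      by (simp add: sylvester_mat_sub_index cA cB)
  qed
  hence degQ': "degree Q \<le> 2*d*d" using dA dB'
    by (metis (no_types, lifting) add_mono mult.commute mult_2 mult_le_mono1 order_trans mult.assoc)
  have Q0: "Q \<noteq> 0" using res Q_def by simp
  define c where "c = coeff Q (degree Q)"
  have c0: "c \<noteq> 0" using Q0 c_def by simp
  define l where "l = degree c"
  define U where "U = map_poly (\<lambda>q. coeff q l) Q"
  have "coeff U (degree Q) = coeff c l" unfolding U_def c_def by (simp add: coeff_map_poly)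
  hence U0: "U \<noteq> 0" using c0 l_def by auto
  have degU: "degree U \<le> 2*d*d" unfolding U_def using degQ' degree_map_poly_le order_trans by blast
  have "poly U y0 = 0" if H: "\<forall>w0. \<exists>v0. poly (map_poly (ev y0 w0) A) v0 = 0 \<and> poly (map_poly (ev y0 w0) B) v0 = 0" for y0
  proof -
    have "poly (poly Q [:y0:]) w0 = 0" for w0
    proof -
      obtain v0 where v0: "poly (map_poly (ev y0 w0) A) v0 = 0" "poly (map_poly (ev y0 w0) B) v0 = 0" using H by blast
      have "poly (poly Q [:y0:]) w0 = ev y0 w0 Q" by (simp add: ev_def)
      also have "\<dots> = resultant_sub ?m ?n (map_poly (ev y0 w0) A) (map_poly (ev y0 w0) B)"
        unfolding Qs by (rule resultant_sub_hom[OF crh_ev])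
      also have "\<dots> = 0"
        by (rule resultant_sub_common_root[OF degree_map_poly_le degree_map_poly_le _ v0]) (use dB in auto)
      finally show ?thesis .
    qed
    hence "poly Q [:y0:] = 0" using poly_all_0_iff_0 by blast
    thus ?thesis unfolding U_def poly_coeff_map by simp
  qed
  thus ?thesis using U0 degU by blast
qed



lemma deg_le_by: "(\<And>i. coeff p i \<noteq> 0 \<Longrightarrow> i \<le> D) \<Longrightarrow> degree p \<le> D"
  by (cases "p = 0") auto

lemma ex_coeff: "p \<noteq> 0 \<Longrightarrow> \<exists>k. coeff p k \<noteq> 0"
  using leading_coeff_neq_0 by blast

lemma td_bound:
  assumes "coeff (coeff (coeff F i) j) k \<noteq> 0"
  shows "i + j + k \<le> total_degree3 F"
proof -
  let ?S = "{i + j + k | i j k. coeff (coeff (coeff F i) j) k \<noteq> 0}"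
  define M2 where "M2 = (\<Sum>i\<le>degree F. degree (coeff F i))"
  define M3 where "M3 = (\<Sum>i\<le>degree F. \<Sum>j\<le>degree (coeff F i). degree (coeff (coeff F i) j))"
  have "?S \<subseteq> {..degree F + M2 + M3}"
  proof
    fix s assume "s \<in> ?S"
    then obtain i j k where s: "s = i + j + k" and c: "coeff (coeff (coeff F i) j) k \<noteq> 0" by blast
    have ci: "coeff F i \<noteq> 0" using c by auto
    have cj: "coeff (coeff F i) j \<noteq> 0" using c by auto
    have i: "i \<le> degree F" using ci le_degree by blast
    have j: "j \<le> degree (coeff F i)" using cj le_degree by blast
    have k: "k \<le> degree (coeff (coeff F i) j)" using c le_degree by blast
    have "degree (coeff F i) \<le> M2" unfolding M2_def using i by (intro member_le_sum) auto
    moreover have "degree (coeff (coeff F i) j) \<le> (\<Sum>j\<le>degree (coeff F i). degree (coeff (coeff F i) j))"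
      using j by (intro member_le_sum) auto
    moreover have "(\<Sum>j\<le>degree (coeff F i). degree (coeff (coeff F i) j)) \<le> M3"
      unfolding M3_def using i by (intro member_le_sum[where f="\<lambda>i. \<Sum>j\<le>degree (coeff F i). degree (coeff (coeff F i) j)"]) auto
    ultimately show "s \<in> {..degree F + M2 + M3}" using i j k s by auto
  qed
  hence fin: "finite ?S" by (rule finite_subset) simp
  have "i + j + k \<in> ?S" using assms by blast
  hence "i + j + k \<le> Max (insert 0 ?S)" using fin by (intro Max_ge) auto
  thus ?thesis unfolding total_degree3_def .
qed

lemma degF_le: "degree F \<le> total_degree3 F"
proof (rule deg_le_by)
  fix i assume "coeff F i \<noteq> 0"
  then obtain j where "coeff (coeff F i) j \<noteq> 0" using ex_coeff by blast
  then obtain k where "coeff (coeff (coeff F i) j) k \<noteq> 0" using ex_coeff by blast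
  thus "i \<le> total_degree3 F" using td_bound by fastforce
qed

lemma degcF_le: "degree (coeff F i) \<le> total_degree3 F"
proof (rule deg_le_by)
  fix j assume "coeff (coeff F i) j \<noteq> 0"
  then obtain k where "coeff (coeff (coeff F i) j) k \<noteq> 0" using ex_coeff by blast
  thus "j \<le> total_degree3 F" using td_bound by fastforce
qed

lemma degsigF_le: "degree (sig F) \<le> total_degree3 F"
proof (rule deg_le_by)
  fix k assume "coeff (sig F) k \<noteq> 0"
  then obtain j where "coeff (coeff (sig F) k) j \<noteq> 0" using ex_coeff by blast
  then obtain i where "coeff (coeff (coeff (sig F) k) j) i \<noteq> 0" using ex_coeff by blast
  thus "k \<le> total_degree3 F" unfolding coeff_sig using td_bound by fastforce
qed

lemma degcsigF_le: "degree (coeff (sig F) k) \<le> total_degree3 F"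
proof (rule deg_le_by)
  fix j assume "coeff (coeff (sig F) k) j \<noteq> 0"
  then obtain i where "coeff (coeff (coeff (sig F) k) j) i \<noteq> 0" using ex_coeff by blast
  thus "j \<le> total_degree3 F" unfolding coeff_sig using td_bound by fastforce
qed

lemma unit_deg0: "is_unit (p :: complex poly poly poly) \<Longrightarrow> degree p = 0"
  by (auto simp: is_unit_poly_iff)

lemma dx_deg: "dx3 F \<noteq> 0 \<Longrightarrow> degree F \<ge> 1"
  unfolding dx3_def by (metis One_nat_def degree_pderiv_le less_one not_less pderiv_eq_0_iff)

lemma dz_deg: assumes "dz3 F \<noteq> 0" shows "degree (sig F) \<ge> 1"
proof -
  obtain i where i: "coeff (dz3 F) i \<noteq> 0" using assms ex_coeff by blast
  then obtain j where "coeff (coeff (dz3 F) i) j \<noteq> 0" using ex_coeff by blast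
  hence "pderiv (coeff (coeff F i) j) \<noteq> 0" unfolding dz3_def by (simp add: coeff_map_poly)
  hence "degree (coeff (coeff F i) j) \<noteq> 0" using pderiv_eq_0_iff by blast
  then obtain k where k: "k \<ge> 1" "coeff (coeff (coeff F i) j) k \<noteq> 0"
    by (metis leading_coeff_neq_0 degree_0 less_one not_less)
  hence "coeff (coeff (coeff (sig F) k) j) i \<noteq> 0" by (simp add: coeff_sig)
  hence "coeff (sig F) k \<noteq> 0" by auto
  thus ?thesis using k le_degree order_trans by blast
qed



definition R1 :: "poly3 \<Rightarrow> complex set" where
  "R1 F = {y0. \<exists>x0. poly (poly F [:[:x0:]:]) [:y0:] = 0}"
definition R2 :: "poly3 \<Rightarrow> complex set" where
  "R2 F = {y0. \<exists>z0. map_poly (\<lambda>q. poly (poly q [:y0:]) z0) F = 0}"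

lemma Rset_split: "Rset F = R1 F \<union> R2 F"
  unfolding Rset_def R1_def R2_def by auto

lemma resultant_nz_irr:
  fixes F A :: "complex poly poly poly"
  assumes irr: "irreducible F" and ndvd: "\<not> F dvd A"
  shows "resultant A F \<noteq> 0"
proof
  assume "resultant A F = 0"
  hence dg: "degree (gcd A F) \<noteq> 0" using resultant_0_gcd by blast
  have "gcd A F dvd F" by simp
  hence "F dvd gcd A F \<or> is_unit (gcd A F)" using irr irreducibleD' by blast
  hence "F dvd A"
  proof
    assume "F dvd gcd A F"
    thus "F dvd A" using gcd_dvd1 by (rule dvd_trans)
  next
    assume "is_unit (gcd A F)"
    hence "degree (gcd A F) = 0" by (rule unit_deg0)
    thus "F dvd A" using dg by simp
  qed
  thus False using ndvd by simp
qed

lemma R1_bound: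
  assumes irr: "irreducible F" and dz: "dz3 F \<noteq> 0" and dx: "dx3 F \<noteq> 0"
  shows "\<exists>u. u \<noteq> 0 \<and> degree u \<le> 2 * total_degree3 F * total_degree3 F \<and> R1 F \<subseteq> {y. poly u y = 0}"
proof -
  let ?d = "total_degree3 F"
  have F0: "F \<noteq> 0" using irr by auto
  obtain i where "coeff F i \<noteq> 0" using F0 ex_coeff by blast
  then obtain j where cij: "coeff (coeff F i) j \<noteq> 0" using ex_coeff by blast
  then obtain z1 where z1: "poly (coeff (coeff F i) j) z1 \<noteq> 0" using poly_all_0_iff_0 by blast
  define h where "h = (\<lambda>q::complex poly. [:poly q z1:])"
  have hh: "comm_ring_hom h" unfolding h_def by (rule crh_comp[OF crh_const crh_poly])
  define A where "A = map_poly (map_poly h) F"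
  have h0: "h 0 = 0" by (simp add: h_def)
  have cA: "coeff (coeff A a) b = h (coeff (coeff F a) b)" for a b
    unfolding A_def using h0 by (simp add: coeff_map_poly)
  have A0: "A \<noteq> 0"
  proof
    assume "A = 0" hence "coeff (coeff A i) j = 0" by simp
    thus False using z1 unfolding cA h_def by simp
  qed
  have evA: "eval3 A x y w = eval3 F x y z1" for x y w
  proof -
    have 1: "map_poly h [:[:x:]:] = [:[:x:]:]" by (simp add: h_def map_poly_pCons0)
    have "poly (map_poly (map_poly h) F) (map_poly h [:[:x:]:]) = map_poly h (poly F [:[:x:]:])"
      by (rule crh_poly_map_poly[OF crh_map[OF hh]])
    hence "poly A [:[:x:]:] = map_poly h (poly F [:[:x:]:])" unfolding A_def 1 .
    moreover have "poly (map_poly h P) [:y:] = h (poly P [:y:])" for P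
    proof -
      have 1: "h [:y:] = [:y:]" by (simp add: h_def)
      have "poly (map_poly h P) (h [:y:]) = h (poly P [:y:])" by (rule crh_poly_map_poly[OF hh])
      thus ?thesis unfolding 1 .
    qed
    ultimately show ?thesis unfolding eval3_def by (simp add: h_def)
  qed
  have degA: "degree A \<le> ?d" unfolding A_def using degF_le degree_map_poly_le order_trans by blast
  have cdegA: "degree (coeff A a) \<le> ?d" for a
    unfolding A_def coeff_map_poly[of "map_poly h", OF map_poly_0]
    using degcF_le degree_map_poly_le order_trans by blast
  have "\<not> F dvd A"
  proof
    assume "F dvd A"
    hence "sig F dvd sig A" by (rule sig_dvd)
    moreover have "sig A \<noteq> 0" using A0 sig_eq_iff[of A 0] sig_zero by auto
    ultimately have "degree (sig F) \<le> degree (sig A)" using dvd_imp_degree_le by blast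
    moreover have "degree (sig A) \<le> 0"
    proof (rule deg_le_by)
      fix k assume "coeff (sig A) k \<noteq> 0"
      then obtain b where "coeff (coeff (sig A) k) b \<noteq> 0" using ex_coeff by blast
      then obtain a where "coeff (coeff (coeff (sig A) k) b) a \<noteq> 0" using ex_coeff by blast
      hence "coeff (h (coeff (coeff F a) b)) k \<noteq> 0" unfolding coeff_sig cA .
      thus "k \<le> 0" by (simp add: h_def coeff_pCons split: nat.splits)
    qed
    ultimately show False using dz_deg[OF dz] by simp
  qed
  hence res: "resultant A F \<noteq> 0" by (rule resultant_nz_irr[OF irr])
  obtain u where u: "u \<noteq> 0" "degree u \<le> 2 * ?d * ?d"
    "\<forall>y0. (\<forall>w0. \<exists>v0. poly (map_poly (ev y0 w0) A) v0 = 0 \<and> poly (map_poly (ev y0 w0) F) v0 = 0) \<longrightarrow> poly u y0 = 0"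
    using elim_bound[OF res dx_deg[OF dx] degA degF_le cdegA degcF_le] by blast
  have "R1 F \<subseteq> {y. poly u y = 0}"
  proof
    fix y0 assume "y0 \<in> R1 F"
    then obtain x0 where x0: "poly (poly F [:[:x0:]:]) [:y0:] = 0" unfolding R1_def by blast
    have e: "eval3 F x0 y0 w = 0" for w unfolding eval3_def x0 by simp
    have "\<forall>w0. \<exists>v0. poly (map_poly (ev y0 w0) A) v0 = 0 \<and> poly (map_poly (ev y0 w0) F) v0 = 0"
    proof
      fix w0
      have "poly (map_poly (ev y0 w0) A) x0 = 0" using evA[of x0 y0 w0] e[of z1] unfolding eval3_ev by simp
      moreover have "poly (map_poly (ev y0 w0) F) x0 = 0" using e[of w0] unfolding eval3_ev .
      ultimately show "\<exists>v0. poly (map_poly (ev y0 w0) A) v0 = 0 \<and> poly (map_poly (ev y0 w0) F) v0 = 0" by blast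
    qed
    thus "y0 \<in> {y. poly u y = 0}" using u(3) by blast
  qed
  thus ?thesis using u by blast
qed

lemma coeff_poly_const_zero:
  fixes F :: "complex poly poly poly"
  assumes "\<And>i. coeff (coeff (coeff F i) j) k = 0"
  shows "coeff (coeff (poly F [:[:a:]:]) j) k = 0"
  using assms
proof (induct F)
  case (pCons c F)
  have "coeff (coeff c j) k = 0" using pCons(3)[of 0] by simp
  moreover have "coeff (coeff (poly F [:[:a:]:]) j) k = 0"
    using pCons(2) pCons(3)[of "Suc i" for i] by simp
  ultimately show ?case by simp
qed simp

lemma R2_bound:
  assumes irr: "irreducible F" and dz: "dz3 F \<noteq> 0" and dx: "dx3 F \<noteq> 0"
  shows "\<exists>u. u \<noteq> 0 \<and> degree u \<le> 2 * total_degree3 F * total_degree3 F \<and> R2 F \<subseteq> {y. poly u y = 0}"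
proof -
  let ?d = "total_degree3 F"
  have F0: "F \<noteq> 0" using irr by auto
  have "finite {c. poly F c = 0}" by (rule poly_roots_finite[OF F0])
  hence "finite ((\<lambda>x. [:[:x:]:]) -` {c. poly F c = 0})" by (rule finite_vimageI) (simp add: inj_on_def)
  then obtain x1 where x1: "poly F [:[:x1:]:] \<noteq> 0"
    using ex_new_if_finite[OF infinite_UNIV_char_0] by auto
  define G where "G = poly F [:[:x1:]:]"
  define A2 where "A2 = [:G:]"
  have A20: "A2 \<noteq> 0" using x1 by (simp add: A2_def G_def)
  have evA2: "eval3 A2 x y w = eval3 F x1 y w" for x y w by (simp add: A2_def G_def eval3_def)
  have c3A2: "coeff (coeff (coeff A2 i) j) k \<noteq> 0 \<Longrightarrow> i = 0 \<and> (\<exists>i'. coeff (coeff (coeff F i') j) k \<noteq> 0)" for i j k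
  proof -
    assume a: "coeff (coeff (coeff A2 i) j) k \<noteq> 0"
    hence "i = 0" by (cases i) (auto simp: A2_def)
    moreover have "coeff (coeff G j) k \<noteq> 0" using a \<open>i = 0\<close> by (simp add: A2_def)
    hence "\<exists>i'. coeff (coeff (coeff F i') j) k \<noteq> 0" unfolding G_def using coeff_poly_const_zero by blast
    ultimately show ?thesis by blast
  qed
  have degA: "degree (sig A2) \<le> ?d"
  proof (rule deg_le_by)
    fix k assume "coeff (sig A2) k \<noteq> 0"
    then obtain j where "coeff (coeff (sig A2) k) j \<noteq> 0" using ex_coeff by blast
    then obtain i where "coeff (coeff (coeff (sig A2) k) j) i \<noteq> 0" using ex_coeff by blast
    then obtain i' where "coeff (coeff (coeff F i') j) k \<noteq> 0" using c3A2 unfolding coeff_sig by blast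
    thus "k \<le> ?d" using td_bound by fastforce
  qed
  have cdegA: "degree (coeff (sig A2) k) \<le> ?d" for k
  proof (rule deg_le_by)
    fix j assume "coeff (coeff (sig A2) k) j \<noteq> 0"
    then obtain i where "coeff (coeff (coeff (sig A2) k) j) i \<noteq> 0" using ex_coeff by blast
    then obtain i' where "coeff (coeff (coeff F i') j) k \<noteq> 0" using c3A2 unfolding coeff_sig by blast
    thus "j \<le> ?d" using td_bound by fastforce
  qed
  have "\<not> sig F dvd sig A2"
  proof
    assume "sig F dvd sig A2"
    hence "F dvd A2" by (simp add: sig_dvd_iff)
    hence "degree F \<le> degree A2" using A20 dvd_imp_degree_le by blast
    thus False using dx_deg[OF dx] by (simp add: A2_def)
  qed
  hence res: "resultant (sig A2) (sig F) \<noteq> 0" by (rule resultant_nz_irr[OF sig_irreducible[OF irr]])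
  obtain u where u: "u \<noteq> 0" "degree u \<le> 2 * ?d * ?d"
    "\<forall>y0. (\<forall>w0. \<exists>v0. poly (map_poly (ev y0 w0) (sig A2)) v0 = 0 \<and> poly (map_poly (ev y0 w0) (sig F)) v0 = 0) \<longrightarrow> poly u y0 = 0"
    using elim_bound[OF res dz_deg[OF dz] degA degsigF_le cdegA degcsigF_le] by blast
  have "R2 F \<subseteq> {y. poly u y = 0}"
  proof
    fix y0 assume "y0 \<in> R2 F"
    then obtain z0 where z0: "map_poly (ev y0 z0) F = 0" unfolding R2_def ev_def by blast
    have e: "eval3 F x y0 z0 = 0" for x unfolding eval3_ev z0 by simp
    have "\<forall>w0. \<exists>v0. poly (map_poly (ev y0 w0) (sig A2)) v0 = 0 \<and> poly (map_poly (ev y0 w0) (sig F)) v0 = 0"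
    proof
      fix w0
      have "poly (map_poly (ev y0 w0) (sig A2)) z0 = 0"
        unfolding eval3_ev[symmetric] eval3_sig evA2 using e by simp
      moreover have "poly (map_poly (ev y0 w0) (sig F)) z0 = 0"
        unfolding eval3_ev[symmetric] eval3_sig using e by simp
      ultimately show "\<exists>v0. poly (map_poly (ev y0 w0) (sig A2)) v0 = 0 \<and> poly (map_poly (ev y0 w0) (sig F)) v0 = 0" by blast
    qed
    thus "y0 \<in> {y. poly u y = 0}" using u(3) by blast
  qed
  thus ?thesis using u by blast
qed

lemma card_roots_le:
  fixes u :: "complex poly"
  assumes u: "u \<noteq> 0" and S: "S \<subseteq> {y. poly u y = 0}"
  shows "finite S \<and> card S \<le> degree u"
proof -
  have fin: "finite {y. poly u y = 0}" by (rule poly_roots_finite[OF u])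
  have "card S \<le> card {y. poly u y = 0}" by (rule card_mono[OF fin S])
  also have "\<dots> \<le> degree u" by (rule card_poly_roots_bound[OF u])
  finally show ?thesis using finite_subset[OF S fin] by simp
qed

lemma Rset_bound:
  assumes irr: "irreducible F" and dz: "dz3 F \<noteq> 0" and dx: "dx3 F \<noteq> 0"
  shows "finite (Rset F) \<and> card (Rset F) \<le> 4 * total_degree3 F * total_degree3 F"
proof -
  obtain u1 where u1: "u1 \<noteq> 0" "degree u1 \<le> 2 * total_degree3 F * total_degree3 F" "R1 F \<subseteq> {y. poly u1 y = 0}"
    using R1_bound[OF assms] by blast
  obtain u2 where u2: "u2 \<noteq> 0" "degree u2 \<le> 2 * total_degree3 F * total_degree3 F" "R2 F \<subseteq> {y. poly u2 y = 0}"
    using R2_bound[OF assms] by blast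
  have f1: "finite (R1 F)" "card (R1 F) \<le> degree u1" using card_roots_le[OF u1(1) u1(3)] by auto
  have f2: "finite (R2 F)" "card (R2 F) \<le> degree u2" using card_roots_le[OF u2(1) u2(3)] by auto
  have "card (Rset F) \<le> card (R1 F) + card (R2 F)" unfolding Rset_split by (rule card_Un_le)
  thus ?thesis using f1 f2 u1(2) u2(2) unfolding Rset_split by auto
qed



definition spec :: "complex \<Rightarrow> complex poly poly \<Rightarrow> complex poly" where
  "spec t p = map_poly (\<lambda>q. poly q t) p"

lemma deg_spec: "poly (lead_coeff p) t \<noteq> 0 \<Longrightarrow> degree (spec t p) = degree p"
proof -
  assume a: "poly (lead_coeff p) t \<noteq> 0"
  have "coeff (spec t p) (degree p) = poly (lead_coeff p) t" unfolding spec_def by (simp add: coeff_map_poly)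
  hence "degree p \<le> degree (spec t p)" using a le_degree by metis
  moreover have "degree (spec t p) \<le> degree p" unfolding spec_def by (rule degree_map_poly_le)
  ultimately show ?thesis by simp
qed

lemma pick_t:
  fixes p :: "complex poly poly" and B :: "complex poly"
  assumes p0: "p \<noteq> 0" and B0: "B \<noteq> 0"
    and G: "\<And>\<alpha>. \<exists>G. G \<noteq> 0 \<and> (\<forall>t. poly (spec t p) \<alpha> = poly G t)"
  shows "\<exists>t. degree (spec t p) = degree p \<and> spec t p \<noteq> 0 \<and> \<not>(\<exists>x. poly B x = 0 \<and> poly (spec t p) x = 0)"
proof -
  obtain Gf where Gf: "\<And>\<alpha>. Gf \<alpha> \<noteq> 0 \<and> (\<forall>t. poly (spec t p) \<alpha> = poly (Gf \<alpha>) t)"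
    using G by metis
  let ?bad = "{t. poly (lead_coeff p) t = 0} \<union> (\<Union>\<alpha>\<in>{\<alpha>. poly B \<alpha> = 0}. {t. poly (Gf \<alpha>) t = 0})"
  have "lead_coeff p \<noteq> 0" using p0 by simp
  hence f1: "finite {t. poly (lead_coeff p) t = 0}" by (rule poly_roots_finite)
  have f2: "finite {\<alpha>. poly B \<alpha> = 0}" by (rule poly_roots_finite[OF B0])
  have "finite ?bad" using f1 f2 Gf poly_roots_finite by auto
  then obtain t where t: "t \<notin> ?bad" using ex_new_if_finite[OF infinite_UNIV_char_0] by blast
  have lc: "poly (lead_coeff p) t \<noteq> 0" using t by blast
  have d: "degree (spec t p) = degree p" by (rule deg_spec[OF lc])
  have "coeff (spec t p) (degree p) \<noteq> 0" using lc unfolding spec_def by (simp add: coeff_map_poly)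
  hence nz: "spec t p \<noteq> 0" by auto
  have "\<not>(\<exists>x. poly B x = 0 \<and> poly (spec t p) x = 0)"
  proof
    assume "\<exists>x. poly B x = 0 \<and> poly (spec t p) x = 0"
    then obtain x where x: "poly B x = 0" "poly (spec t p) x = 0" by blast
    hence "poly (Gf x) t = 0" using Gf by simp
    thus False using t x by blast
  qed
  thus ?thesis using d nz by blast
qed

definition pF :: "poly3 \<Rightarrow> complex \<Rightarrow> complex poly poly" where
  "pF F y = map_poly (\<lambda>q. poly q [:y:]) F"

lemma spec_pF: "spec w (pF F y) = map_poly (ev y w) F"
  unfolding spec_def pF_def ev_def by (subst map_poly_map_poly) (auto simp: o_def)

lemma poly_spec_pF: "poly (spec w (pF F y)) x = eval3 F x y w"
  unfolding spec_pF eval3_ev ..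

lemma G_exists:
  assumes "y \<notin> R1 F"
  shows "\<exists>G. G \<noteq> 0 \<and> (\<forall>t. poly (spec t (pF F y)) \<alpha> = poly G t)"
proof -
  have "poly (poly F [:[:\<alpha>:]:]) [:y:] \<noteq> 0" using assms unfolding R1_def by blast
  moreover have "poly (spec t (pF F y)) \<alpha> = poly (poly (poly F [:[:\<alpha>:]:]) [:y:]) t" for t
    unfolding poly_spec_pF eval3_def ..
  ultimately show ?thesis by blast
qed

lemma spec_nz:
  assumes "y \<notin> R2 F"
  shows "spec w (pF F y) \<noteq> 0"
  using assms unfolding spec_pF R2_def ev_def by blast

definition eout :: "complex poly poly \<Rightarrow> poly3" where
  "eout p = map_poly (map_poly (\<lambda>a. [:a:])) p"
definition ein :: "complex poly poly \<Rightarrow> poly3" where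
  "ein p = map_poly (\<lambda>b. [:b:]) p"

lemma map_ev_eout: "map_poly (ev z z') (eout p) = spec z p"
  unfolding eout_def spec_def
proof (subst map_poly_map_poly)
  show "ev z z' 0 = 0" by (simp add: ev_def)
  show "map_poly (ev z z' \<circ> map_poly (\<lambda>a. [:a:])) p = map_poly (\<lambda>q. poly q z) p"
    by (rule map_poly_cong) (simp add: ev_def coeff_lift_hom.poly_map_poly)
qed

lemma map_ev_ein: "map_poly (ev z z') (ein p) = spec z' p"
  unfolding ein_def spec_def
proof (subst map_poly_map_poly)
  show "ev z z' 0 = 0" by (simp add: ev_def)
  show "map_poly (ev z z' \<circ> (\<lambda>a. [:a:])) p = map_poly (\<lambda>q. poly q z') p"
    by (rule map_poly_cong) (simp add: ev_def)
qed

lemma eval2_P: "eval2 (resultant_sub m n (eout p1) (ein p2)) (z, z') = resultant_sub m n (spec z p1) (spec z' p2)"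
proof -
  have "eval2 (resultant_sub m n (eout p1) (ein p2)) (z, z') = ev z z' (resultant_sub m n (eout p1) (ein p2))"
    by (simp add: eval2_def ev_def)
  also have "\<dots> = resultant_sub m n (map_poly (ev z z') (eout p1)) (map_poly (ev z z') (ein p2))"
    by (rule resultant_sub_hom[OF crh_ev])
  finally show ?thesis unfolding map_ev_eout map_ev_ein .
qed

lemma degree_spec_le: "degree (spec t p) \<le> degree p"
  unfolding spec_def by (rule degree_map_poly_le)

lemma gamma_sub:
  assumes m: "degree (pF F y1) \<le> m" and n: "degree (pF F y2) \<le> n" and mn: "0 < m + n"
  shows "gamma F y1 y2 \<subseteq> {q. eval2 (resultant_sub m n (eout (pF F y1)) (ein (pF F y2))) q = 0}"
proof -
  let ?P = "resultant_sub m n (eout (pF F y1)) (ein (pF F y2))"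
  have "\<forall>q\<in>{(z, z'). \<exists>x. eval3 F x y1 z = 0 \<and> eval3 F x y2 z' = 0}. eval2 ?P q = 0"
  proof
    fix q assume "q \<in> {(z, z'). \<exists>x. eval3 F x y1 z = 0 \<and> eval3 F x y2 z' = 0}"
    then obtain z z' x where q: "q = (z,z')" "eval3 F x y1 z = 0" "eval3 F x y2 z' = 0" by blast
    have "eval2 ?P q = resultant_sub m n (spec z (pF F y1)) (spec z' (pF F y2))" unfolding q eval2_P ..
    also have "\<dots> = 0"
      by (rule resultant_sub_common_root[OF order_trans[OF degree_spec_le m] order_trans[OF degree_spec_le n] mn])
         (use q in \<open>simp_all add: poly_spec_pF\<close>)
    finally show "eval2 ?P q = 0" .
  qed
  thus ?thesis unfolding gamma_def zariski_cl_def zero_set2_def by blast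
qed

lemma no_lines:
  assumes y1: "y1 \<notin> Rset F" and y2: "y2 \<notin> Rset F"
  shows "\<not> contains_axis_parallel_line (gamma F y1 y2)"
proof
  let ?p1 = "pF F y1" and ?p2 = "pF F y2"
  have y1': "y1 \<notin> R1 F" "y1 \<notin> R2 F" and y2': "y2 \<notin> R1 F" "y2 \<notin> R2 F" using y1 y2 Rset_split by auto
  have p10: "?p1 \<noteq> 0" using spec_nz[OF y1'(2), of 0] by (auto simp: spec_def)
  have p20: "?p2 \<noteq> 0" using spec_nz[OF y2'(2), of 0] by (auto simp: spec_def)
  assume "contains_axis_parallel_line (gamma F y1 y2)"
  then obtain c where "{(c, t) | t. True} \<subseteq> gamma F y1 y2 \<or> {(t, c) | t. True} \<subseteq> gamma F y1 y2"
    unfolding contains_axis_parallel_line_def by blast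
  thus False
  proof
    assume L: "{(c, t) | t. True} \<subseteq> gamma F y1 y2"
    let ?m = "max 1 (degree ?p1)" and ?n = "degree ?p2"
    obtain t where t: "degree (spec t ?p2) = degree ?p2" "spec t ?p2 \<noteq> 0"
        "\<not>(\<exists>x. poly (spec c ?p1) x = 0 \<and> poly (spec t ?p2) x = 0)"
      using pick_t[OF p20 spec_nz[OF y1'(2)] G_exists[OF y2'(1)]] by blast
    have "resultant_sub ?m ?n (spec c ?p1) (spec t ?p2) \<noteq> 0"
      by (rule resultant_sub_nonzero[OF spec_nz[OF y1'(2)] t(2)]) (use t degree_spec_le[of c ?p1] in auto)
    moreover have "(c,t) \<in> gamma F y1 y2" using L by blast
    hence "eval2 (resultant_sub ?m ?n (eout ?p1) (ein ?p2)) (c,t) = 0"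
    proof -
      have "gamma F y1 y2 \<subseteq> {q. eval2 (resultant_sub ?m ?n (eout ?p1) (ein ?p2)) q = 0}"
        by (rule gamma_sub) auto
      thus ?thesis using \<open>_ \<in> gamma F y1 y2\<close> by blast
    qed
    ultimately show False unfolding eval2_P by simp
  next
    assume L: "{(t, c) | t. True} \<subseteq> gamma F y1 y2"
    let ?m = "degree ?p1" and ?n = "max 1 (degree ?p2)"
    obtain t where t: "degree (spec t ?p1) = degree ?p1" "spec t ?p1 \<noteq> 0"
        "\<not>(\<exists>x. poly (spec c ?p2) x = 0 \<and> poly (spec t ?p1) x = 0)"
      using pick_t[OF p10 spec_nz[OF y2'(2)] G_exists[OF y1'(1)]] by blast
    have "resultant_sub ?m ?n (spec t ?p1) (spec c ?p2) \<noteq> 0"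
      by (rule resultant_sub_nonzero[OF t(2) spec_nz[OF y2'(2)]]) (use t degree_spec_le[of c ?p2] in auto)
    moreover have "(t,c) \<in> gamma F y1 y2" using L by blast
    hence "eval2 (resultant_sub ?m ?n (eout ?p1) (ein ?p2)) (t,c) = 0"
    proof -
      have "gamma F y1 y2 \<subseteq> {q. eval2 (resultant_sub ?m ?n (eout ?p1) (ein ?p2)) q = 0}"
        by (rule gamma_sub) auto
      thus ?thesis using \<open>_ \<in> gamma F y1 y2\<close> by blast
    qed
    ultimately show False unfolding eval2_P by simp
  qed
qed



definition Vl :: "complex \<Rightarrow> (complex \<times> complex) set" where "Vl r = {(r, t) | t. True}"
definition Hl :: "complex \<Rightarrow> (complex \<times> complex) set" where "Hl r = {(t, r) | t. True}"
definition axl :: "(complex \<times> complex) set \<Rightarrow> bool" where "axl L \<longleftrightarrow> (\<exists>r. L = Vl r) \<or> (\<exists>r. L = Hl r)"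

lemma eval2_mult: "eval2 (p * q) x = eval2 p x * eval2 q x"
  using crh_mult[OF crh_ev] by (simp add: eval2_def ev_def)

lemma eval2_one: "eval2 1 x = 1" by (simp add: eval2_def)

definition polV :: "complex \<Rightarrow> poly2" where "polV r = [:[:-r:],[:1:]:]"
definition polH :: "complex \<Rightarrow> poly2" where "polH r = [:[:-r,1:]:]"
lemma eval2_V: "eval2 (polV r) (x,y) = x - r" by (simp add: eval2_def polV_def)
lemma eval2_H: "eval2 (polH r) (x,y) = y - r" by (simp add: eval2_def polH_def)

lemma alg_zero: "algebraic2 (zero_set2 S)" by (auto simp: algebraic2_def)

lemma alg_Int: assumes "algebraic2 A" "algebraic2 B" shows "algebraic2 (A \<inter> B)"
proof -
  obtain S T where "A = zero_set2 S" "B = zero_set2 T" using assms by (auto simp: algebraic2_def)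
  hence "A \<inter> B = zero_set2 (S \<union> T)" by (auto simp: zero_set2_def)
  thus ?thesis by (simp add: alg_zero)
qed

lemma alg_Un: assumes "algebraic2 A" "algebraic2 B" shows "algebraic2 (A \<union> B)"
proof -
  obtain S T where ST: "A = zero_set2 S" "B = zero_set2 T" using assms by (auto simp: algebraic2_def)
  have "A \<union> B = zero_set2 {s * t | s t. s \<in> S \<and> t \<in> T}"
  proof
    show "A \<union> B \<subseteq> zero_set2 {s * t | s t. s \<in> S \<and> t \<in> T}"
      using ST by (auto simp: zero_set2_def eval2_mult)
    show "zero_set2 {s * t | s t. s \<in> S \<and> t \<in> T} \<subseteq> A \<union> B"
    proof
      fix x assume x: "x \<in> zero_set2 {s * t | s t. s \<in> S \<and> t \<in> T}"
      show "x \<in> A \<union> B"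
      proof (rule ccontr)
        assume "x \<notin> A \<union> B"
        then obtain s t where "s \<in> S" "t \<in> T" "eval2 s x \<noteq> 0" "eval2 t x \<noteq> 0"
          using ST by (auto simp: zero_set2_def)
        moreover have "eval2 (s * t) x = 0" using x \<open>s \<in> S\<close> \<open>t \<in> T\<close> by (auto simp: zero_set2_def)
        ultimately show False by (simp add: eval2_mult)
      qed
    qed
  qed
  thus ?thesis by (simp add: alg_zero)
qed

lemma alg_empty: "algebraic2 {}"
proof -
  have "{} = zero_set2 {1}" by (auto simp: zero_set2_def eval2_one)
  thus ?thesis by (metis alg_zero)
qed

lemma alg_single: "algebraic2 {(a,b)}"
proof -
  have "{(a,b)} = zero_set2 {polV a, polH b}"
    by (auto simp: zero_set2_def eval2_V eval2_H)
  thus ?thesis by (simp add: alg_zero)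
qed

lemma alg_finite: "finite A \<Longrightarrow> algebraic2 A"
proof (induct A rule: finite_induct)
  case empty thus ?case by (rule alg_empty)
next
  case (insert x A)
  have "insert x A = {(fst x, snd x)} \<union> A" by simp
  thus ?case using alg_Un[OF alg_single insert(3)] by metis
qed

lemma alg_UN: "finite I \<Longrightarrow> (\<And>A. A \<in> I \<Longrightarrow> algebraic2 A) \<Longrightarrow> algebraic2 (\<Union>I)"
  by (induct I rule: finite_induct) (auto intro: alg_Un alg_empty)

lemma alg_Vl: "algebraic2 (Vl r)"
proof -
  have "Vl r = zero_set2 {polV r}" by (auto simp: zero_set2_def eval2_V Vl_def)
  thus ?thesis by (simp add: alg_zero)
qed

lemma alg_Hl: "algebraic2 (Hl r)"
proof -
  have "Hl r = zero_set2 {polH r}" by (auto simp: zero_set2_def eval2_H Hl_def)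
  thus ?thesis by (simp add: alg_zero)
qed

lemma alg_axl: "axl L \<Longrightarrow> algebraic2 L" using alg_Vl alg_Hl by (auto simp: axl_def)

lemma Vl_img: "Vl r = (\<lambda>t. (r,t)) ` UNIV" by (auto simp: Vl_def)
lemma Hl_img: "Hl r = (\<lambda>t. (t,r)) ` UNIV" by (auto simp: Hl_def)

lemma axl_infinite: "axl L \<Longrightarrow> infinite L"
proof -
  have i: "infinite (UNIV :: complex set)" by (rule infinite_UNIV_char_0)
  have "infinite (Vl r)" for r unfolding Vl_img using i by (auto dest!: finite_imageD simp: inj_on_def)
  moreover have "infinite (Hl r)" for r unfolding Hl_img using i by (auto dest!: finite_imageD simp: inj_on_def)
  ultimately show "axl L \<Longrightarrow> infinite L" by (auto simp: axl_def)
qed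

lemma mem_Vl[simp]: "(x,y) \<in> Vl r \<longleftrightarrow> x = r" by (auto simp: Vl_def)
lemma mem_Hl[simp]: "(x,y) \<in> Hl r \<longleftrightarrow> y = r" by (auto simp: Hl_def)

lemma axl_nest: assumes "axl L" "axl L'" "L \<subseteq> L'" shows "L = L'"
proof -
  { fix r s assume "Vl r \<subseteq> Vl s"
    hence "(r,0) \<in> Vl s" by (meson mem_Vl subsetD)
    hence "Vl r = Vl s" by simp }
  moreover
  { fix r s assume "Vl r \<subseteq> Hl s"
    hence "(r,0) \<in> Hl s" "(r,1) \<in> Hl s" by (meson mem_Vl subsetD)+
    hence False by simp }
  moreover
  { fix r s assume "Hl r \<subseteq> Vl s"
    hence "(0,r) \<in> Vl s" "(1,r) \<in> Vl s" by (meson mem_Hl subsetD)+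
    hence False by simp }
  moreover
  { fix r s assume "Hl r \<subseteq> Hl s"
    hence "(0,r) \<in> Hl s" by (meson mem_Hl subsetD)
    hence "Hl r = Hl s" by simp }
  ultimately show ?thesis using assms unfolding axl_def by blast
qed



lemma eval2_Vline: "eval2 p (r,t) = poly (poly p [:r:]) t" by (simp add: eval2_def)
lemma eval2_Hline: "eval2 p (t,r) = poly (map_poly (\<lambda>q. poly q r) p) t"
proof -
  have "poly (map_poly (\<lambda>q. poly q r) p) ((\<lambda>q. poly q r) [:t:]) = poly (poly p [:t:]) r"
    by (rule crh_poly_map_poly[OF crh_poly])
  thus ?thesis by (simp add: eval2_def)
qed

lemma line_poly: "axl L \<Longrightarrow> \<exists>\<phi>. inj \<phi> \<and> L = range \<phi> \<and> (\<forall>p. \<exists>u. \<forall>t. eval2 p (\<phi> t) = poly u t)"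
proof -
  assume "axl L"
  then consider r where "L = Vl r" | r where "L = Hl r" unfolding axl_def by blast
  thus ?thesis
  proof cases
    case 1
    have "\<forall>p. \<exists>u. \<forall>t. eval2 p (r,t) = poly u t" using eval2_Vline by blast
    thus ?thesis using 1 Vl_img[of r] by (intro exI[of _ "\<lambda>t. (r,t)"]) (auto simp: inj_on_def)
  next
    case 2
    have "\<forall>p. \<exists>u. \<forall>t. eval2 p (t,r) = poly u t" using eval2_Hline by blast
    thus ?thesis using 2 Hl_img[of r] by (intro exI[of _ "\<lambda>t. (t,r)"]) (auto simp: inj_on_def)
  qed
qed

lemma alg_on_line:
  assumes L: "axl L" and A: "algebraic2 A"
  shows "L \<subseteq> A \<or> finite (A \<inter> L)"
proof (cases "L \<subseteq> A")
  case True thus ?thesis by simp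
next
  case False
  hence nL: "\<not> L \<subseteq> A" .
  obtain \<phi> where phi: "inj \<phi>" "L = range \<phi>" "\<forall>p. \<exists>u. \<forall>t. eval2 p (\<phi> t) = poly u t"
    using line_poly[OF L] by blast
  obtain S where S: "A = zero_set2 S" using A by (auto simp: algebraic2_def)
  obtain x where x: "x \<in> L" "x \<notin> A" using nL by blast
  obtain t0 where "x = \<phi> t0" using x(1) phi(2) by blast
  hence t0: "\<phi> t0 \<notin> A" using x by simp
  then obtain p where p: "p \<in> S" "eval2 p (\<phi> t0) \<noteq> 0" using S by (auto simp: zero_set2_def)
  obtain u where u: "\<forall>t. eval2 p (\<phi> t) = poly u t" using phi(3) by blast
  have u0: "u \<noteq> 0" using u p(2) by auto
  have "A \<inter> L \<subseteq> \<phi> ` {t. poly u t = 0}"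
  proof
    fix x assume "x \<in> A \<inter> L"
    then obtain t where t: "x = \<phi> t" "x \<in> A" using phi(2) by auto
    hence "eval2 p x = 0" using S p(1) by (auto simp: zero_set2_def)
    thus "x \<in> \<phi> ` {t. poly u t = 0}" using t u by auto
  qed
  moreover have "finite (\<phi> ` {t. poly u t = 0})" using poly_roots_finite[OF u0] by simp
  ultimately have "finite (A \<inter> L)" by (rule finite_subset)
  thus ?thesis by simp
qed

lemma irred_nonempty: "irred_alg2 W \<Longrightarrow> W \<noteq> {}" by (simp add: irred_alg2_def)

lemma irred_finite_single:
  assumes W: "irred_alg2 W" and f: "finite W" shows "\<exists>p. W = {p}"
proof -
  obtain a where a: "a \<in> W" using irred_nonempty[OF W] by blast
  have "W = {a} \<union> (W - {a})" using a by auto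
  moreover have "algebraic2 {a}" using alg_single[of "fst a" "snd a"] by simp
  moreover have "algebraic2 (W - {a})" using f by (intro alg_finite) simp
  ultimately have "W = {a} \<or> W = W - {a}" using W unfolding irred_alg2_def by blast
  thus ?thesis using a by blast
qed

lemma axl_irred: assumes L: "axl L" shows "irred_alg2 L"
  unfolding irred_alg2_def
proof (intro conjI allI impI)
  show "algebraic2 L" by (rule alg_axl[OF L])
  show "L \<noteq> {}" using axl_infinite[OF L] by auto
  fix A B assume A: "algebraic2 A" and B: "algebraic2 B" and eq: "L = A \<union> B"
  have "L \<subseteq> A \<or> finite (A \<inter> L)" by (rule alg_on_line[OF L A])
  moreover have "L \<subseteq> B \<or> finite (B \<inter> L)" by (rule alg_on_line[OF L B])
  moreover have "A \<inter> L = A" "B \<inter> L = B" using eq by auto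
  moreover have "infinite L" by (rule axl_infinite[OF L])
  ultimately show "L = A \<or> L = B" using eq by auto
qed

lemma irred_sub_line:
  assumes L: "axl L" and W: "irred_alg2 W" and sub: "W \<subseteq> L"
  shows "(\<exists>p. W = {p}) \<or> W = L"
proof -
  have "L \<subseteq> W \<or> finite (W \<inter> L)" by (rule alg_on_line[OF L]) (use W in \<open>simp add: irred_alg2_def\<close>)
  thus ?thesis
  proof
    assume "L \<subseteq> W" thus ?thesis using sub by blast
  next
    assume "finite (W \<inter> L)"
    hence "finite W" using sub by (simp add: Int_absorb2)
    thus ?thesis using irred_finite_single[OF W] by blast
  qed
qed

lemma irred_in_Union:
  assumes fin: "finite I" and alg: "\<And>A. A \<in> I \<Longrightarrow> algebraic2 A"
    and W: "irred_alg2 W" and sub: "W \<subseteq> \<Union>I"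
  shows "\<exists>A\<in>I. W \<subseteq> A"
  using fin alg sub
proof (induct I rule: finite_induct)
  case empty thus ?case using irred_nonempty[OF W] by auto
next
  case (insert A I)
  have WA: "algebraic2 W" using W by (simp add: irred_alg2_def)
  have a1: "algebraic2 (W \<inter> A)" using insert(4) WA by (intro alg_Int) auto
  have a2: "algebraic2 (W \<inter> \<Union>I)" using insert WA by (intro alg_Int alg_UN) auto
  have "W = (W \<inter> A) \<union> (W \<inter> \<Union>I)" using insert(5) by auto
  hence "W = W \<inter> A \<or> W = W \<inter> \<Union>I" using W a1 a2 unfolding irred_alg2_def by blast
  thus ?case
  proof
    assume "W = W \<inter> A" thus ?thesis by blast
  next
    assume "W = W \<inter> \<Union>I"
    hence "W \<subseteq> \<Union>I" by blast
    thus ?thesis using insert by blast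
  qed
qed

lemma alg_dim_one:
  assumes cl: "\<And>W. irred_alg2 W \<Longrightarrow> W \<subseteq> V \<Longrightarrow> (\<exists>p. W = {p}) \<or> axl W"
    and ex: "axl L" "L \<subseteq> V"
  shows "alg_dim2 V = 1"
proof -
  let ?K = "{k. \<exists>c :: nat \<Rightarrow> (complex \<times> complex) set.
      (\<forall>i\<le>k. irred_alg2 (c i) \<and> c i \<subseteq> V) \<and> (\<forall>i<k. c i \<subset> c (Suc i))}"
  obtain p where p: "p \<in> L" using axl_infinite[OF ex(1)] by (metis finite.emptyI ex_in_conv)
  define c where "c = (\<lambda>i::nat. if i = 0 then {p} else L)"
  have "{p} \<subset> L" using p axl_infinite[OF ex(1)] by auto
  moreover have "irred_alg2 {p}"
    unfolding irred_alg2_def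
  proof (intro conjI allI impI)
    show "algebraic2 {p}" using alg_single[of "fst p" "snd p"] by simp
    show "{p} \<noteq> {}" by simp
    fix A B assume "algebraic2 A" "algebraic2 B" and eq: "{p} = A \<union> B"
    show "{p} = A \<or> {p} = B"
    proof (cases "p \<in> A")
      case True
      have "A \<subseteq> {p}" using eq by blast
      thus ?thesis using True by blast
    next
      case False
      hence "p \<in> B" using eq by blast
      moreover have "B \<subseteq> {p}" using eq by blast
      ultimately show ?thesis by blast
    qed
  qed
  ultimately have "1 \<in> ?K" using axl_irred[OF ex(1)] ex(2) p
    by (intro CollectI exI[of _ c]) (auto simp: c_def le_Suc_eq)
  moreover have "k \<le> 1" if k: "k \<in> ?K" for k
  proof (rule ccontr)
    assume "\<not> k \<le> 1"
    hence k2: "2 \<le> k" by simp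
    obtain c where c: "\<forall>i\<le>k. irred_alg2 (c i) \<and> c i \<subseteq> V" "\<forall>i<k. c i \<subset> c (Suc i)" using k by blast
    have c01: "c 0 \<subset> c 1" and c12: "c 1 \<subset> c 2" using c(2) k2 by (auto simp: numeral_2_eq_2)
    have i0: "irred_alg2 (c 0)" and i1: "irred_alg2 (c 1)" "c 1 \<subseteq> V" and i2: "irred_alg2 (c 2)" "c 2 \<subseteq> V"
      using c(1) k2 by auto
    have "\<not>(\<exists>p. c 1 = {p})" using c01 irred_nonempty[OF i0] by (auto simp: subset_singleton_iff)
    hence a1: "axl (c 1)" using cl[OF i1] by blast
    have "\<not>(\<exists>p. c 2 = {p})" using c12 axl_infinite[OF a1] by (metis finite.emptyI finite_insert finite_subset psubset_imp_subset)
    hence a2: "axl (c 2)" using cl[OF i2] by blast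
    have "c 1 = c 2" using axl_nest[OF a1 a2] c12 by blast
    thus False using c12 by simp
  qed
  ultimately have "Sup ?K = 1" by (intro cSup_eq_maximum) auto
  thus ?thesis unfolding alg_dim2_def .
qed



lemma axl_dim: assumes L: "axl L" shows "alg_dim2 L = 1"
proof (rule alg_dim_one[OF _ L order_refl])
  fix W assume "irred_alg2 W" "W \<subseteq> L"
  thus "(\<exists>p. W = {p}) \<or> axl W" using irred_sub_line[OF L] L by blast
qed

lemma infinite_param:
  assumes "v \<noteq> (0::complex)" shows "infinite {(a, b + t * v) | t. True}"
proof -
  have "{(a, b + t * v) | t. True} = (\<lambda>t. (a, b + t * v)) ` UNIV" by auto
  moreover have "inj (\<lambda>t. (a, b + t * v))" using assms by (auto simp: inj_on_def)
  ultimately show ?thesis using infinite_UNIV_char_0 by (auto dest!: finite_imageD)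
qed

lemma infinite_param2:
  assumes "u \<noteq> (0::complex)" shows "infinite {(a + t * u, b) | t. True}"
proof -
  have "{(a + t * u, b) | t. True} = (\<lambda>t. (a + t * u, b)) ` UNIV" by auto
  moreover have "inj (\<lambda>t. (a + t * u, b))" using assms by (auto simp: inj_on_def)
  ultimately show ?thesis using infinite_UNIV_char_0 by (auto dest!: finite_imageD)
qed

lemma card_line_inter:
  assumes L: "axl L" and uv: "(u, v) \<noteq> (0::complex, 0::complex)"
    and fin: "finite (L \<inter> {(a + t * u, b + t * v) | t. True})"
  shows "card (L \<inter> {(a + t * u, b + t * v) | t. True}) \<le> 1"
proof -
  let ?M = "{(a + t * u, b + t * v) | t. True}"
  consider r where "L = Vl r" | r where "L = Hl r" using L unfolding axl_def by blast
  thus ?thesis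
  proof cases
    case 1
    show ?thesis
    proof (cases "u = 0")
      case False
      have "L \<inter> ?M \<subseteq> {(a + ((r - a)/u) * u, b + ((r - a)/u) * v)}"
      proof
        fix x assume "x \<in> L \<inter> ?M"
        hence xL: "x \<in> L" and "x \<in> ?M" by auto
        then obtain t where t1: "x = (a + t * u, b + t * v)" by blast
        have "a + t * u = r" using xL t1 1 by simp
        note t = t1 this
        hence "t = (r - a) / u" using False by (auto simp: field_simps)
        thus "x \<in> {(a + ((r - a)/u) * u, b + ((r - a)/u) * v)}" using t by simp
      qed
      hence "card (L \<inter> ?M) \<le> card {(a + ((r - a)/u) * u, b + ((r - a)/u) * v)}" by (intro card_mono) auto
      thus ?thesis by simp
    next
      case True
      hence v0: "v \<noteq> 0" using uv by simp
      show ?thesis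
      proof (cases "a = r")
        case True
        have eq: "L \<inter> ?M = {(a, b + t * v) | t. True}" using 1 True \<open>u = 0\<close> by auto
        have False using fin[unfolded eq] infinite_param[OF v0, of a b] by blast
        thus ?thesis ..
      next
        case False
        have "L \<inter> ?M = {}" using 1 False \<open>u = 0\<close> by auto
        thus ?thesis by simp
      qed
    qed
  next
    case 2
    show ?thesis
    proof (cases "v = 0")
      case False
      have "L \<inter> ?M \<subseteq> {(a + ((r - b)/v) * u, b + ((r - b)/v) * v)}"
      proof
        fix x assume "x \<in> L \<inter> ?M"
        hence xL: "x \<in> L" and "x \<in> ?M" by auto
        then obtain t where t1: "x = (a + t * u, b + t * v)" by blast
        have "b + t * v = r" using xL t1 2 by simp
        note t = t1 this
        hence "t = (r - b) / v" using False by (auto simp: field_simps)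
        thus "x \<in> {(a + ((r - b)/v) * u, b + ((r - b)/v) * v)}" using t by simp
      qed
      hence "card (L \<inter> ?M) \<le> card {(a + ((r - b)/v) * u, b + ((r - b)/v) * v)}" by (intro card_mono) auto
      thus ?thesis by simp
    next
      case True
      hence u0: "u \<noteq> 0" using uv by simp
      show ?thesis
      proof (cases "b = r")
        case True
        have eq: "L \<inter> ?M = {(a + t * u, b) | t. True}" using 2 True \<open>v = 0\<close> by auto
        have False using fin[unfolded eq] infinite_param2[OF u0, of a b] by blast
        thus ?thesis ..
      next
        case False
        have "L \<inter> ?M = {}" using 2 False \<open>v = 0\<close> by auto
        thus ?thesis by simp
      qed
    qed
  qed
qed

lemma axl_deg: assumes L: "axl L" shows "irred_deg2 L = 1"
proof -
  let ?D = "{card (L \<inter> M) | M. affine_sub2 (2 - alg_dim2 L) M \<and> finite (L \<inter> M)}"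
  have a1: "affine_sub2 (2 - alg_dim2 L) M \<longleftrightarrow>
     (\<exists>a b u v. (u, v) \<noteq> (0, 0) \<and> M = {(a + t * u, b + t * v) | t. True})" for M
    unfolding axl_dim[OF L] affine_sub2_def by simp
  have "1 \<in> ?D"
  proof -
    consider r where "L = Vl r" | r where "L = Hl r" using L unfolding axl_def by blast
    thus ?thesis
    proof cases
      case 1
      let ?M = "{(0 + t * 1, 0 + t * 0) | t::complex. True}"
      have "L \<inter> ?M = {(r, 0)}" using 1 by auto
      moreover have "affine_sub2 (2 - alg_dim2 L) ?M" unfolding a1 by (intro exI[of _ 0] exI[of _ 1]) auto
      ultimately show ?thesis by (intro CollectI exI[of _ ?M]) auto
    next
      case 2
      let ?M = "{(0 + t * 0, 0 + t * 1) | t::complex. True}"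
      have "L \<inter> ?M = {(0, r)}" using 2 by auto
      moreover have "affine_sub2 (2 - alg_dim2 L) ?M" unfolding a1 by (intro exI[of _ 0] exI[of _ 1]) auto
      ultimately show ?thesis by (intro CollectI exI[of _ ?M]) auto
    qed
  qed
  moreover have "k \<le> 1" if "k \<in> ?D" for k
    using that card_line_inter[OF L] unfolding a1 by blast
  ultimately have "Sup ?D = 1" by (intro cSup_eq_maximum) auto
  thus ?thesis unfolding irred_deg2_def .
qed

definition Lines :: "complex set \<Rightarrow> (complex \<times> complex) set set" where
  "Lines R = Vl ` R \<union> Hl ` R"

lemma Lines_axl: "L \<in> Lines R \<Longrightarrow> axl L" by (auto simp: Lines_def axl_def)

lemma Lines_finite: "finite R \<Longrightarrow> finite (Lines R)" by (simp add: Lines_def)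

lemma mem_Y: "(a, b) \<in> \<Union>(Lines R) \<longleftrightarrow> a \<in> R \<or> b \<in> R"
  by (auto simp: Lines_def)

lemma Y_alg: "finite R \<Longrightarrow> algebraic2 (\<Union>(Lines R))"
  by (intro alg_UN Lines_finite alg_axl Lines_axl)

lemma Y_irred_cl:
  assumes R: "finite R" and W: "irred_alg2 W" and sub: "W \<subseteq> \<Union>(Lines R)"
  shows "\<exists>L\<in>Lines R. W \<subseteq> L"
  by (rule irred_in_Union[OF Lines_finite[OF R] alg_axl[OF Lines_axl] W sub])

lemma Y_cl:
  assumes R: "finite R" and W: "irred_alg2 W" and sub: "W \<subseteq> \<Union>(Lines R)"
  shows "(\<exists>p. W = {p}) \<or> axl W"
proof -
  obtain L where L: "L \<in> Lines R" "W \<subseteq> L" using Y_irred_cl[OF R W sub] by blast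
  thus ?thesis using irred_sub_line[OF Lines_axl[OF L(1)] W L(2)] Lines_axl[OF L(1)] by auto
qed

lemma Y_components:
  assumes R: "finite R"
  shows "irred_components2 (\<Union>(Lines R)) = Lines R"
proof
  show "irred_components2 (\<Union>(Lines R)) \<subseteq> Lines R"
  proof
    fix W assume "W \<in> irred_components2 (\<Union>(Lines R))"
    hence W: "W \<subseteq> \<Union>(Lines R)" "irred_alg2 W"
      and max: "\<And>W'. irred_alg2 W' \<Longrightarrow> W \<subseteq> W' \<Longrightarrow> W' \<subseteq> \<Union>(Lines R) \<Longrightarrow> W' = W"
      unfolding irred_components2_def by auto
    obtain L where L: "L \<in> Lines R" "W \<subseteq> L" using Y_irred_cl[OF R W(2) W(1)] by blast
    have "L = W" using max[OF axl_irred[OF Lines_axl[OF L(1)]] L(2)] L(1) by blast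
    thus "W \<in> Lines R" using L by simp
  qed
  show "Lines R \<subseteq> irred_components2 (\<Union>(Lines R))"
  proof
    fix L assume L: "L \<in> Lines R"
    have aL: "axl L" by (rule Lines_axl[OF L])
    have "W' = L" if W': "irred_alg2 W'" "L \<subseteq> W'" "W' \<subseteq> \<Union>(Lines R)" for W'
    proof -
      have "(\<exists>p. W' = {p}) \<or> axl W'" by (rule Y_cl[OF R W'(1) W'(3)])
      moreover have "\<not>(\<exists>p. W' = {p})"
      proof
        assume "\<exists>p. W' = {p}"
        hence "finite W'" by auto
        thus False using W'(2) axl_infinite[OF aL] finite_subset by blast
      qed
      ultimately have "axl W'" by blast
      thus ?thesis using axl_nest[OF aL _ W'(2)] by simp
    qed
    thus "L \<in> irred_components2 (\<Union>(Lines R))"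
      unfolding irred_components2_def using L axl_irred[OF aL] by blast
  qed
qed

lemma Y_deg:
  assumes R: "finite R"
  shows "var_deg2 (\<Union>(Lines R)) \<le> 2 * card R"
proof -
  have "var_deg2 (\<Union>(Lines R)) = (\<Sum>L\<in>Lines R. irred_deg2 L)"
    unfolding var_deg2_def Y_components[OF R] ..
  also have "\<dots> = (\<Sum>L\<in>Lines R. 1)" using axl_deg Lines_axl by (intro sum.cong) auto
  also have "\<dots> = card (Lines R)" by simp
  also have "\<dots> \<le> card (Vl ` R) + card (Hl ` R)" unfolding Lines_def by (rule card_Un_le)
  also have "\<dots> \<le> card R + card R" by (intro add_mono card_image_le R)
  finally show ?thesis by simp
qed

lemma Y_dim:
  assumes R: "finite R" and r: "r \<in> R"
  shows "alg_dim2 (\<Union>(Lines R)) = 1"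
proof (rule alg_dim_one)
  show "\<And>W. irred_alg2 W \<Longrightarrow> W \<subseteq> \<Union>(Lines R) \<Longrightarrow> (\<exists>p. W = {p}) \<or> axl W" using Y_cl[OF R] by blast
  show "axl (Vl r)" by (auto simp: axl_def)
  show "Vl r \<subseteq> \<Union>(Lines R)" using r by (auto simp: Lines_def)
qed

theorem lemma3p11:
  "\<exists>C::real. \<forall>(F::poly3) d.
     irreducible F \<and> total_degree3 F = d \<and>
     dx3 F \<noteq> 0 \<and> dy3 F \<noteq> 0 \<and> dz3 F \<noteq> 0 \<longrightarrow>
     (\<exists>Y. algebraic2 Y \<and> alg_dim2 Y = 1 \<and> real (var_deg2 Y) \<le> C * real d ^ 2 \<and>
          Rset F \<times> Rset F \<subseteq> Y \<and>
          (\<forall>y1 y2. (y1, y2) \<notin> Y \<longrightarrow> \<not> contains_axis_parallel_line (gamma F y1 y2)))"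
proof (intro exI[of _ 10] allI impI)
  fix F :: poly3 and d :: nat
  assume H: "irreducible F \<and> total_degree3 F = d \<and> dx3 F \<noteq> 0 \<and> dy3 F \<noteq> 0 \<and> dz3 F \<noteq> 0"
  hence irr: "irreducible F" and dd: "total_degree3 F = d" and dx: "dx3 F \<noteq> 0" and dz: "dz3 F \<noteq> 0" by auto
  have Rb: "finite (Rset F)" "card (Rset F) \<le> 4 * d * d" using Rset_bound[OF irr dz dx] dd by auto
  have d1: "1 \<le> d" using dx_deg[OF dx] degF_le[of F] dd by simp
  define R where "R = Rset F \<union> {0}"
  have Rf: "finite R" using Rb by (simp add: R_def)
  have cR: "card R \<le> 4 * d * d + 1" unfolding R_def using Rb card_Un_le[of "Rset F" "{0}"] by simp
  let ?Y = "\<Union>(Lines R)"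
  have "var_deg2 ?Y \<le> 10 * (d * d)"
  proof -
    have "var_deg2 ?Y \<le> 2 * card R" by (rule Y_deg[OF Rf])
    also have "\<dots> \<le> 8 * (d * d) + 2" using cR by simp
    also have "\<dots> \<le> 10 * (d * d)" using d1 by (simp add: mult_le_mono)
    finally show ?thesis .
  qed
  hence vd: "real (var_deg2 ?Y) \<le> 10 * real d ^ 2"
    by (metis (mono_tags, lifting) of_nat_le_iff of_nat_mult of_nat_numeral power2_eq_square)
  have sub: "Rset F \<times> Rset F \<subseteq> ?Y" using mem_Y[of _ _ R] by (auto simp: R_def)
  have nl: "\<forall>y1 y2. (y1, y2) \<notin> ?Y \<longrightarrow> \<not> contains_axis_parallel_line (gamma F y1 y2)"
  proof (intro allI impI)
    fix y1 y2 assume "(y1, y2) \<notin> ?Y"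
    hence "y1 \<notin> Rset F" "y2 \<notin> Rset F" using mem_Y[of y1 y2 R] by (auto simp: R_def)
    thus "\<not> contains_axis_parallel_line (gamma F y1 y2)" by (rule no_lines)
  qed
  show "\<exists>Y. algebraic2 Y \<and> alg_dim2 Y = 1 \<and> real (var_deg2 Y) \<le> 10 * real d ^ 2 \<and>
          Rset F \<times> Rset F \<subseteq> Y \<and>
          (\<forall>y1 y2. (y1, y2) \<notin> Y \<longrightarrow> \<not> contains_axis_parallel_line (gamma F y1 y2))"
    using Y_alg[OF Rf] Y_dim[OF Rf, of 0] vd sub nl by (auto simp: R_def)
qed

end
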